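(* Let $\mathcal{A}$ be an abelian normed algebra, $n\in\mathbb{N}$ and $x_1,\dots,x_n\in\mathcal{A}$. Then the product $x_1x_2\cdots x_n$ is boundedly approximately invertible in $\mathcal{A}$ if and only if each $x_k$, $k=1,\dots,n$, is boundedly approximately invertible in $\mathcal{A}$.
   Context: An approximate identity in $\mathcal{A}$ is a net $(e_j)_{j\in J}$ with $\lim_j e_jy=\lim_j ye_j=y$ for all $y\in\mathcal{A}$; it is norm bounded if $\sup_j\|e_j\|<\infty$. In an abelian normed algebra, $x\in\mathcal{A}$ is boundedly approximately invertible if there is a net $(r_j)_{j\in J}$ in $\mathcal{A}$ such that $(xr_j)_{j\in J}$ is a norm bounded approximate identity in $\mathcal{A}$. *)

theory Defs
  imports "HOL-Analysis.Analysis"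
begin

text \<open>Nets are rendered in the standard Isabelle way: a net \<open>(e j)\<close> is a function
  \<open>e\<close> together with a proper filter \<open>F\<close> on the index type (the filter of tails of
  the directed index set).  Norm boundedness \<open>sup_j norm (e j) < \<infinity>\<close> is required
  on a tail of the net (every tail of a net is again a net with the same limits).\<close>

definition bdd_approx_identity :: "'i filter \<Rightarrow> ('i \<Rightarrow> 'a::real_normed_algebra) \<Rightarrow> bool" where
  "bdd_approx_identity F e \<longleftrightarrow>
     F \<noteq> bot \<and>
     (\<forall>y. ((\<lambda>j. e j * y) \<longlongrightarrow> y) F \<and> ((\<lambda>j. y * e j) \<longlongrightarrow> y) F) \<and>
     (\<exists>M. \<forall>\<^sub>F j in F. norm (e j) \<le> M)"

text \<open>Without loss of generality
  the net is indexed by its own values (push forward of the tail filter along \<open>r\<close>).\<close>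

definition bdd_approx_invertible :: "'a::{real_normed_algebra, comm_ring} \<Rightarrow> bool" where
  "bdd_approx_invertible x \<longleftrightarrow>
     (\<exists>F :: 'a filter. \<exists>r :: 'a \<Rightarrow> 'a. bdd_approx_identity F (\<lambda>j. x * r j))"

text \<open>The product \<open>x_1 x_2 \<cdots> x_n\<close> for \<open>n \<ge> 1\<close> (the algebra need not be unital;
  the value at \<open>n = 0\<close> is irrelevant).\<close>

fun seq_prod :: "(nat \<Rightarrow> 'a::{times,zero}) \<Rightarrow> nat \<Rightarrow> 'a" where
  "seq_prod x 0 = 0"
| "seq_prod x (Suc 0) = x 1"
| "seq_prod x (Suc (Suc m)) = seq_prod x (Suc m) * x (Suc (Suc m))"

end

theory Submission
  imports Defs
begin

lemma transfer_net:
  fixes x :: "'a::{real_normed_algebra, comm_ring}" and t :: "'i \<Rightarrow> 'a"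
  assumes "bdd_approx_identity H (\<lambda>p. x * t p)"
  shows "bdd_approx_invertible x"
proof -
  have "bdd_approx_identity (filtermap t H) (\<lambda>j. x * id j)"
    using assms unfolding bdd_approx_identity_def
    by (simp add: filtermap_bot_iff filterlim_filtermap eventually_filtermap)
  then show ?thesis unfolding bdd_approx_invertible_def by blast
qed

lemma inv_factor:
  fixes a b :: "'a::{real_normed_algebra, comm_ring}"
  assumes "bdd_approx_invertible (a * b)"
  shows "bdd_approx_invertible a"
proof -
  obtain F :: "'a filter" and r where h: "bdd_approx_identity F (\<lambda>j. a * b * r j)"
    using assms unfolding bdd_approx_invertible_def by blast
  have "bdd_approx_identity F (\<lambda>j. a * (b * r j))"
    using h by (simp add: mult.assoc)
  then show ?thesis by (rule transfer_net)
qed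

lemma inv_mult:
  fixes a b :: "'a::{real_normed_algebra, comm_ring}"
  assumes "bdd_approx_invertible a" "bdd_approx_invertible b"
  shows "bdd_approx_invertible (a * b)"
proof -
  obtain F :: "'a filter" and r where hF: "bdd_approx_identity F (\<lambda>j. a * r j)"
    using assms(1) unfolding bdd_approx_invertible_def by blast
  obtain G :: "'a filter" and s where hG: "bdd_approx_identity G (\<lambda>j. b * s j)"
    using assms(2) unfolding bdd_approx_invertible_def by blast
  from hF obtain M where M: "\<forall>\<^sub>F j in F. norm (a * r j) \<le> M" and Fb: "F \<noteq> bot"
    and Fl: "\<And>y. ((\<lambda>j. a * r j * y) \<longlongrightarrow> y) F"
    unfolding bdd_approx_identity_def by blast
  from hG obtain N where N: "\<forall>\<^sub>F j in G. norm (b * s j) \<le> N" and Gb: "G \<noteq> bot"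
    and Gl: "\<And>y. ((\<lambda>j. b * s j * y) \<longlongrightarrow> y) G"
    unfolding bdd_approx_identity_def by blast
  define t where "t p = r (fst p) * s (snd p)" for p
  have eq: "a * b * t p = (a * r (fst p)) * (b * s (snd p))" for p
    unfolding t_def by (simp add: ac_simps)
  have MN: "\<forall>\<^sub>F p in F \<times>\<^sub>F G. norm (a * r (fst p)) \<le> M \<and> norm (b * s (snd p)) \<le> N"
    unfolding eventually_prod_filter using M N by fastforce
  have bd: "\<forall>\<^sub>F p in F \<times>\<^sub>F G. norm (a * b * t p) \<le> M * N"
    using MN
  proof (rule eventually_mono)
    fix p assume h: "norm (a * r (fst p)) \<le> M \<and> norm (b * s (snd p)) \<le> N"
    have "norm (a * b * t p) \<le> norm (a * r (fst p)) * norm (b * s (snd p))"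
      unfolding eq by (rule norm_mult_ineq)
    also have "\<dots> \<le> M * N"
      using h by (meson mult_mono norm_ge_zero order_trans)
    finally show "norm (a * b * t p) \<le> M * N" .
  qed
  have lim: "((\<lambda>p. a * b * t p * y) \<longlongrightarrow> y) (F \<times>\<^sub>F G)" for y
  proof -
    have d: "a * b * t p * y = a * r (fst p) * (b * s (snd p) * y - y) + a * r (fst p) * y" for p
      unfolding eq by (simp add: algebra_simps)
    have l2: "((\<lambda>p. a * r (fst p) * y) \<longlongrightarrow> y) (F \<times>\<^sub>F G)"
      using filterlim_compose[OF Fl[of y] filterlim_fst[of F G]] by (simp add: o_def)
    have g0: "((\<lambda>p. b * s (snd p) * y - y) \<longlongrightarrow> 0) (F \<times>\<^sub>F G)"
      using filterlim_compose[OF Gl[of y] filterlim_snd[of G F]] by (simp add: tendsto_diff[where b=y, THEN tendsto_eq_rhs[of _ _ _ 0]] LIM_zero)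
    have g0n: "((\<lambda>p. M * norm (b * s (snd p) * y - y)) \<longlongrightarrow> 0) (F \<times>\<^sub>F G)"
      using tendsto_mult_right_zero[OF tendsto_norm_zero[OF g0]] by simp
    have ev: "\<forall>\<^sub>F p in F \<times>\<^sub>F G. norm (a * r (fst p) * (b * s (snd p) * y - y)) \<le> M * norm (b * s (snd p) * y - y)"
      using MN
    proof (rule eventually_mono)
      fix p assume h: "norm (a * r (fst p)) \<le> M \<and> norm (b * s (snd p)) \<le> N"
      show "norm (a * r (fst p) * (b * s (snd p) * y - y)) \<le> M * norm (b * s (snd p) * y - y)"
        using h norm_mult_ineq[of "a * r (fst p)" "b * s (snd p) * y - y"]
        by (meson mult_right_mono norm_ge_zero order_trans)
    qed
    have l1: "((\<lambda>p. a * r (fst p) * (b * s (snd p) * y - y)) \<longlongrightarrow> 0) (F \<times>\<^sub>F G)"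
      by (rule Lim_null_comparison[OF ev g0n])
    show ?thesis unfolding d using tendsto_add[OF l1 l2] by simp
  qed
  have "bdd_approx_identity (F \<times>\<^sub>F G) (\<lambda>p. a * b * t p)"
    unfolding bdd_approx_identity_def
    using lim bd Fb Gb by (auto simp: prod_filter_eq_bot mult.commute[of _ "a * b * t _"])
  then show ?thesis by (rule transfer_net)
qed

lemma inv_mult_iff:
  fixes a b :: "'a::{real_normed_algebra, comm_ring}"
  shows "bdd_approx_invertible (a * b) \<longleftrightarrow> bdd_approx_invertible a \<and> bdd_approx_invertible b"
  using inv_mult inv_factor[of a b] inv_factor[of b a] by (metis mult.commute)

lemma main_aux:
  fixes x :: "nat \<Rightarrow> 'a::{real_normed_algebra, comm_ring}"
  shows "bdd_approx_invertible (seq_prod x (Suc m)) \<longleftrightarrow>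
         (\<forall>k\<in>{1..Suc m}. bdd_approx_invertible (x k))"
proof (induction m)
  case 0
  then show ?case by simp
next
  case (Suc m)
  have "{1..Suc (Suc m)} = insert (Suc (Suc m)) {1..Suc m}" by auto
  then show ?case using Suc by (auto simp add: inv_mult_iff)
qed

theorem proposition2p19:
  fixes x :: "nat \<Rightarrow> 'a::{real_normed_algebra, comm_ring}" and n :: nat
  assumes "n \<ge> 1"
  shows "bdd_approx_invertible (seq_prod x n) \<longleftrightarrow>
         (\<forall>k\<in>{1..n}. bdd_approx_invertible (x k))"
proof -
  obtain m where "n = Suc m" using assms by (cases n) auto
  then show ?thesis using main_aux by simp
qed

end
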